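(* For every $n\ge1$, $x^n\,\hat B_n^-(1/x)=\hat B_n^+(x)$, where $\hat B_n^-(x)=\sum_{\sigma\in\mathcal B_n,\ \sigma(1)<0}x^{\hat d_B(\sigma)}$ and $\hat B_n^+(x)=\sum_{\sigma\in\mathcal B_n,\ \sigma(1)>0}x^{\hat d_B(\sigma)}$.
   Context: $\mathcal B_n$ is the set of signed permutations (bijections $\sigma$ of $\{\pm1,\dots,\pm n\}$ with $\sigma(-i)=-\sigma(i)$), written as words $\sigma(1)\cdots\sigma(n)$ with $\sigma(0)=0$. $\hat d_B(\sigma)$ is the number of $i\in\{0\}\cup[n-1]$ such that either $\sigma(i)<\sigma(i+1)$ and $i$ is even, or $\sigma(i)>\sigma(i+1)$ and $i$ is odd. *)

theory Defs
  imports "HOL-Analysis.Analysis"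
begin

text \<open>Signed permutations of rank n, represented as functions on the integers:
  a bijection of {-n..n} - {0} with sigma(-i) = - sigma(i), extended by sigma(0) = 0
  and the identity outside [-n, n] (so that each signed permutation has a unique
  representative).\<close>
definition signed_perms :: "nat \<Rightarrow> (int \<Rightarrow> int) set" where
  "signed_perms n = {\<sigma>. bij_betw \<sigma> ({-int n..int n} - {0}) ({-int n..int n} - {0})
      \<and> (\<forall>i. \<sigma> (-i) = - \<sigma> i)
      \<and> \<sigma> 0 = 0
      \<and> (\<forall>i. \<bar>i\<bar> > int n \<longrightarrow> \<sigma> i = i)}"

definition dhatB :: "nat \<Rightarrow> (int \<Rightarrow> int) \<Rightarrow> nat" where
  "dhatB n \<sigma> = card {i \<in> {0..<n}.
      (\<sigma> (int i) < \<sigma> (int i + 1) \<and> even i) \<or> (\<sigma> (int i) > \<sigma> (int i + 1) \<and> odd i)}"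

definition Bhat_minus :: "nat \<Rightarrow> real \<Rightarrow> real" where
  "Bhat_minus n x = (\<Sum>\<sigma>\<in>{\<sigma>\<in>signed_perms n. \<sigma> 1 < 0}. x ^ dhatB n \<sigma>)"

definition Bhat_plus :: "nat \<Rightarrow> real \<Rightarrow> real" where
  "Bhat_plus n x = (\<Sum>\<sigma>\<in>{\<sigma>\<in>signed_perms n. \<sigma> 1 > 0}. x ^ dhatB n \<sigma>)"

end

theory Submission
  imports Defs
begin

definition negf :: "nat \<Rightarrow> (int \<Rightarrow> int) \<Rightarrow> int \<Rightarrow> int" where
  "negf n \<sigma> = (\<lambda>i. if \<bar>i\<bar> \<le> int n then - \<sigma> i else \<sigma> i)"

lemma negf_negf: "negf n (negf n \<sigma>) = \<sigma>"
  unfolding negf_def by (rule ext) simp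

lemma negf_1: "n \<ge> 1 \<Longrightarrow> negf n \<sigma> 1 = - \<sigma> 1"
  unfolding negf_def by simp

lemma neg_sp: assumes "\<sigma> \<in> signed_perms n" shows "negf n \<sigma> \<in> signed_perms n"
proof -
  let ?A = "{-int n..int n} - {0}"
  have b: "bij_betw \<sigma> ?A ?A" and o: "\<forall>i. \<sigma> (-i) = - \<sigma> i" and z: "\<sigma> 0 = 0"
    and f: "\<forall>i. \<bar>i\<bar> > int n \<longrightarrow> \<sigma> i = i"
    using assms unfolding signed_perms_def by auto
  have u: "bij_betw uminus ?A ?A"
    by (rule bij_betwI[where g=uminus]) auto
  have "bij_betw (uminus \<circ> \<sigma>) ?A ?A" using bij_betw_trans[OF b u] .
  hence "bij_betw (\<lambda>i. - \<sigma> i) ?A ?A" by (simp add: comp_def)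
  moreover have "\<And>i. i \<in> ?A \<Longrightarrow> negf n \<sigma> i = - \<sigma> i" unfolding negf_def by auto
  ultimately have b2: "bij_betw (negf n \<sigma>) ?A ?A" using bij_betw_cong by (metis (no_types, lifting))
  have o2: "\<forall>i. negf n \<sigma> (-i) = - negf n \<sigma> i"
    unfolding negf_def using o by simp
  have z2: "negf n \<sigma> 0 = 0" unfolding negf_def using z by simp
  have f2: "\<forall>i. \<bar>i\<bar> > int n \<longrightarrow> negf n \<sigma> i = i"
    unfolding negf_def using f by simp
  show ?thesis unfolding signed_perms_def using b2 o2 z2 f2 by blast
qed

lemma dhat_le: "dhatB n \<sigma> \<le> n"
proof -
  have "dhatB n \<sigma> \<le> card {0..<n}" unfolding dhatB_def by (rule card_mono) auto
  thus ?thesis by simp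
qed

lemma dhat_neg:
  assumes "\<sigma> \<in> signed_perms n" "\<sigma> 1 < 0"
  shows "dhatB n (negf n \<sigma>) = n - dhatB n \<sigma>"
proof -
  let ?A = "{-int n..int n} - {0}"
  have b: "bij_betw \<sigma> ?A ?A" and z: "\<sigma> 0 = 0"
    using assms unfolding signed_perms_def by auto
  define S where "S = {i \<in> {0..<n}.
      (\<sigma> (int i) < \<sigma> (int i + 1) \<and> even i) \<or> (\<sigma> (int i) > \<sigma> (int i + 1) \<and> odd i)}"
  define T where "T = {i \<in> {0..<n}.
      (negf n \<sigma> (int i) < negf n \<sigma> (int i + 1) \<and> even i) \<or> (negf n \<sigma> (int i) > negf n \<sigma> (int i + 1) \<and> odd i)}"
  have ne: "\<sigma> (int i) \<noteq> \<sigma> (int i + 1)" if "i < n" for i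
  proof (cases "i = 0")
    case True thus ?thesis using z assms(2) by simp
  next
    case False
    hence m: "int i \<in> ?A" "int i + 1 \<in> ?A" using that by auto
    show ?thesis
    proof
      assume "\<sigma> (int i) = \<sigma> (int i + 1)"
      from inj_onD[OF bij_betw_imp_inj_on[OF b] this m] show False by simp
    qed
  qed
  have T: "T = {0..<n} - S"
  proof -
    have "i \<in> T \<longleftrightarrow> i \<in> {0..<n} - S" for i
    proof (cases "i < n")
      case True
      have eS: "i \<in> S \<longleftrightarrow> (\<sigma> (int i) < \<sigma> (int i + 1) \<and> even i) \<or> (\<sigma> (int i) > \<sigma> (int i + 1) \<and> odd i)"
        unfolding S_def using True by simp
      have eT: "i \<in> T \<longleftrightarrow> (\<sigma> (int i) > \<sigma> (int i + 1) \<and> even i) \<or> (\<sigma> (int i) < \<sigma> (int i + 1) \<and> odd i)"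
        unfolding T_def negf_def using True by simp
      have n1: "\<sigma> (int i) \<noteq> \<sigma> (int i + 1)" using ne[OF True] .
      have "i \<in> T \<longleftrightarrow> i \<notin> S"
      proof (cases "\<sigma> (int i) < \<sigma> (int i + 1)")
        case True thus ?thesis using eS eT by auto
      next
        case False
        hence "\<sigma> (int i) > \<sigma> (int i + 1)" using n1 by linarith
        thus ?thesis using eS eT by auto
      qed
      thus ?thesis using True by simp
    next
      case False thus ?thesis unfolding T_def by simp
    qed
    thus ?thesis by blast
  qed
  have c: "card T = card {0..<n} - card S"
    unfolding T by (rule card_Diff_subset) (auto simp: S_def)
  have "dhatB n \<sigma> = card S" unfolding dhatB_def S_def by (rule refl)
  moreover have "dhatB n (negf n \<sigma>) = card T" unfolding dhatB_def T_def by (rule refl)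
  ultimately show ?thesis using c by (simp only: card_atLeastLessThan diff_zero)
qed

theorem mainTheorem9:
  fixes n :: nat and x :: real
  assumes "n \<ge> 1" and "x \<noteq> 0"
  shows "x ^ n * Bhat_minus n (1 / x) = Bhat_plus n x"
proof -
  let ?M = "{\<sigma>\<in>signed_perms n. \<sigma> 1 < 0}"
  let ?P = "{\<sigma>\<in>signed_perms n. \<sigma> 1 > 0}"
  have "Bhat_plus n x = (\<Sum>\<sigma>\<in>?M. x ^ dhatB n (negf n \<sigma>))"
    unfolding Bhat_plus_def
  proof (rule sum.reindex_bij_witness[where i="negf n" and j="negf n"])
    fix a assume "a \<in> ?P" show "negf n (negf n a) = a" by (rule negf_negf)
  next
    fix a assume h: "a \<in> ?P"
    hence "a \<in> signed_perms n" "a 1 > 0" by simp_all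
    thus "negf n a \<in> ?M" using neg_sp[of a n] negf_1[OF assms(1)] by simp
  next
    fix b assume "b \<in> ?M" show "negf n (negf n b) = b" by (rule negf_negf)
  next
    fix b assume h: "b \<in> ?M"
    hence "b \<in> signed_perms n" "b 1 < 0" by simp_all
    thus "negf n b \<in> ?P" using neg_sp[of b n] negf_1[OF assms(1)] by simp
  next
    fix a assume "a \<in> ?P" show "x ^ dhatB n (negf n (negf n a)) = x ^ dhatB n a" by (simp only: negf_negf)
  qed
  also have "\<dots> = (\<Sum>\<sigma>\<in>?M. x ^ n * (1 / x) ^ dhatB n \<sigma>)"
  proof (rule sum.cong)
    fix \<sigma> assume "\<sigma> \<in> ?M"
    hence d: "dhatB n (negf n \<sigma>) = n - dhatB n \<sigma>" using dhat_neg by blast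
    have le: "dhatB n \<sigma> \<le> n" by (rule dhat_le)
    have "x ^ n = x ^ (n - dhatB n \<sigma>) * x ^ dhatB n \<sigma>"
      using le by (simp add: power_add[symmetric])
    moreover have "x ^ dhatB n \<sigma> \<noteq> 0" using assms(2) by simp
    ultimately show "x ^ dhatB n (negf n \<sigma>) = x ^ n * (1 / x) ^ dhatB n \<sigma>"
      unfolding d power_one_over by simp
  qed simp
  also have "\<dots> = x ^ n * (\<Sum>\<sigma>\<in>?M. (1 / x) ^ dhatB n \<sigma>)"
    by (rule sum_distrib_left[symmetric])
  finally show ?thesis unfolding Bhat_minus_def by simp
qed

end
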